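(* Let $k$ be a $\Delta=\{\partial_0,\ldots,\partial_m\}$-field and let $L$ be a parameterized liouvillian extension of $k$. Then $L=\bigcup_{i\in\mathbb N}L_i$ for a chain of fields $k=L_0\subset L_1\subset\cdots$ with $L_{i+1}=L_i(\{t_{i,j}\}_{j\in\mathbb N})$, where $\{t_{i,j}\}$ is a set of elements such that for each $j$ either $\partial_0t_{i,j}\in L_i$, or $t_{i,j}\ne0$ and $\partial_0t_{i,j}/t_{i,j}\in L_i$, or $t_{i,j}$ is algebraic over $L_i$.
   Context: All fields have characteristic zero. $C_L^0$ denotes the $\partial_0$-constants of $L$, and $L\langle t\rangle_\Delta$ the field generated over $L$ by $t$ and all its derivatives with respect to $\Delta$. A $\Delta$-field $L\supset k$ is a parameterized liouvillian extension of $k$ if $C_L^0=C_k^0$ and there is a tower of $\Delta$-fields $k=M_0\subset M_1\subset\cdots\subset M_r=L$ with $M_i=M_{i-1}\langle s_i\rangle_\Delta$ where for each $i$ either $\partial_0s_i\in M_{i-1}$, or $s_i\ne0$ and $\partial_0s_i/s_i\in M_{i-1}$, or $s_i$ is algebraic over $M_{i-1}$. *)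

theory Defs
  imports "HOL-Computational_Algebra.Polynomial"
begin

text \<open>Ambient type 'a is a field of characteristic zero; all fields considered are
subfields (carrier sets) of 'a. The family of derivations
Delta = {D 0, ..., D m} is given by D :: nat => 'a => 'a; D 0 plays the role of the
distinguished derivation partial_0.\<close>

definition subfield :: "'a::field set \<Rightarrow> bool" where
  "subfield F \<longleftrightarrow> 0 \<in> F \<and> 1 \<in> F \<and>
     (\<forall>x\<in>F. \<forall>y\<in>F. x + y \<in> F \<and> x * y \<in> F) \<and>
     (\<forall>x\<in>F. - x \<in> F \<and> inverse x \<in> F)"

definition delta_field :: "nat \<Rightarrow> (nat \<Rightarrow> 'a::field \<Rightarrow> 'a) \<Rightarrow> 'a set \<Rightarrow> bool" where
  "delta_field m D F \<longleftrightarrow> subfield F \<and>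
     (\<forall>i\<le>m. \<forall>x\<in>F. D i x \<in> F) \<and>
     (\<forall>i\<le>m. \<forall>x\<in>F. \<forall>y\<in>F. D i (x + y) = D i x + D i y \<and>
                           D i (x * y) = x * D i y + D i x * y) \<and>
     (\<forall>i\<le>m. \<forall>j\<le>m. \<forall>x\<in>F. D i (D j x) = D j (D i x))"

definition const0 :: "(nat \<Rightarrow> 'a::field \<Rightarrow> 'a) \<Rightarrow> 'a set \<Rightarrow> 'a set" where
  "const0 D F = {x \<in> F. D 0 x = 0}"

definition field_gen :: "'a::field set \<Rightarrow> 'a set \<Rightarrow> 'a set" where
  "field_gen M T = \<Inter>{F. subfield F \<and> M \<subseteq> F \<and> T \<subseteq> F}"

inductive_set derivs :: "nat \<Rightarrow> (nat \<Rightarrow> 'a \<Rightarrow> 'a) \<Rightarrow> 'a \<Rightarrow> 'a set"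
  for m D t where
  self: "t \<in> derivs m D t"
| step: "x \<in> derivs m D t \<Longrightarrow> i \<le> m \<Longrightarrow> D i x \<in> derivs m D t"

definition delta_gen :: "nat \<Rightarrow> (nat \<Rightarrow> 'a::field \<Rightarrow> 'a) \<Rightarrow> 'a set \<Rightarrow> 'a \<Rightarrow> 'a set" where
  "delta_gen m D M t = field_gen M (derivs m D t)"

definition algebraic_over :: "'a::field set \<Rightarrow> 'a \<Rightarrow> bool" where
  "algebraic_over M t \<longleftrightarrow> (\<exists>p. p \<noteq> 0 \<and> (\<forall>i. coeff p i \<in> M) \<and> poly p t = 0)"

definition liouv_elem :: "(nat \<Rightarrow> 'a::field \<Rightarrow> 'a) \<Rightarrow> 'a set \<Rightarrow> 'a \<Rightarrow> bool" where
  "liouv_elem D M s \<longleftrightarrow> D 0 s \<in> M \<or> (s \<noteq> 0 \<and> D 0 s / s \<in> M) \<or> algebraic_over M s"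

definition param_liouvillian ::
  "nat \<Rightarrow> (nat \<Rightarrow> 'a::field \<Rightarrow> 'a) \<Rightarrow> 'a set \<Rightarrow> 'a set \<Rightarrow> bool" where
  "param_liouvillian m D k L \<longleftrightarrow>
     delta_field m D L \<and> delta_field m D k \<and> k \<subseteq> L \<and>
     const0 D L = const0 D k \<and>
     (\<exists>r (Ms :: nat \<Rightarrow> 'a set) (s :: nat \<Rightarrow> 'a).
        Ms 0 = k \<and> Ms r = L \<and> (\<forall>i\<le>r. delta_field m D (Ms i)) \<and>
        (\<forall>i<r. Ms i \<subseteq> Ms (Suc i) \<and>
               Ms (Suc i) = delta_gen m D (Ms i) (s (Suc i)) \<and>
               liouv_elem D (Ms i) (s (Suc i))))"

end

theory Submission
  imports Defs "HOL-Library.Countable_Set"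
begin

section \<open>Subfields and generated fields\<close>

lemma sf_0: "subfield F \<Longrightarrow> 0 \<in> F" by (simp add: subfield_def)
lemma sf_1: "subfield F \<Longrightarrow> 1 \<in> F" by (simp add: subfield_def)
lemma sf_add: "subfield F \<Longrightarrow> x \<in> F \<Longrightarrow> y \<in> F \<Longrightarrow> x + y \<in> F" by (simp add: subfield_def)
lemma sf_mult: "subfield F \<Longrightarrow> x \<in> F \<Longrightarrow> y \<in> F \<Longrightarrow> x * y \<in> F" by (simp add: subfield_def)
lemma sf_uminus: "subfield F \<Longrightarrow> x \<in> F \<Longrightarrow> - x \<in> F" by (simp add: subfield_def)
lemma sf_inverse: "subfield F \<Longrightarrow> x \<in> F \<Longrightarrow> inverse x \<in> F" by (simp add: subfield_def)
lemma sf_diff: "subfield F \<Longrightarrow> x \<in> F \<Longrightarrow> y \<in> F \<Longrightarrow> x - y \<in> F"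
  by (metis diff_conv_add_uminus sf_add sf_uminus)
lemma sf_divide: "subfield F \<Longrightarrow> x \<in> F \<Longrightarrow> y \<in> F \<Longrightarrow> x / y \<in> F"
  by (simp add: divide_inverse sf_inverse sf_mult)
lemma sf_power: "subfield F \<Longrightarrow> x \<in> F \<Longrightarrow> x ^ n \<in> F"
  by (induction n) (auto simp: sf_1 sf_mult)
lemma sf_of_nat: "subfield F \<Longrightarrow> of_nat n \<in> F"
  by (induction n) (auto simp: sf_0 sf_1 sf_add)

lemma fg_subfield: "subfield (field_gen A T)"
  unfolding field_gen_def subfield_def by blast
lemma fg_A: "A \<subseteq> field_gen A T"
  unfolding field_gen_def by blast
lemma fg_T: "T \<subseteq> field_gen A T"
  unfolding field_gen_def by blast
lemma fg_least: "subfield F \<Longrightarrow> A \<subseteq> F \<Longrightarrow> T \<subseteq> F \<Longrightarrow> field_gen A T \<subseteq> F"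
  unfolding field_gen_def by blast
lemma fg_id: "subfield F \<Longrightarrow> T \<subseteq> F \<Longrightarrow> field_gen F T = F"
  by (meson fg_A fg_least order_refl subset_antisym)

lemma sf_poly:
  assumes "subfield F" "\<forall>i. coeff p i \<in> F" "x \<in> F"
  shows "poly p x \<in> F"
  using assms(2)
proof (induction p)
  case (pCons a p)
  have "a \<in> F" using pCons.prems by (metis coeff_pCons_0)
  moreover have "\<forall>i. coeff p i \<in> F" using pCons.prems by (metis coeff_pCons_Suc)
  ultimately show ?case using pCons.IH assms by (simp add: sf_add sf_mult)
qed (simp add: sf_0 assms)

section \<open>Derivation rules\<close>

lemma df_sf: "delta_field m D L \<Longrightarrow> subfield L" by (simp add: delta_field_def)
lemma df_cl: "delta_field m D L \<Longrightarrow> i \<le> m \<Longrightarrow> x \<in> L \<Longrightarrow> D i x \<in> L"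
  by (simp add: delta_field_def)
lemma df_add: "delta_field m D L \<Longrightarrow> i \<le> m \<Longrightarrow> x \<in> L \<Longrightarrow> y \<in> L \<Longrightarrow> D i (x + y) = D i x + D i y"
  by (simp add: delta_field_def)
lemma df_mult: "delta_field m D L \<Longrightarrow> i \<le> m \<Longrightarrow> x \<in> L \<Longrightarrow> y \<in> L \<Longrightarrow> D i (x * y) = x * D i y + D i x * y"
  by (simp add: delta_field_def)
lemma df_comm: "delta_field m D L \<Longrightarrow> i \<le> m \<Longrightarrow> j \<le> m \<Longrightarrow> x \<in> L \<Longrightarrow> D i (D j x) = D j (D i x)"
  by (simp add: delta_field_def)

lemma df_zero: "delta_field m D L \<Longrightarrow> i \<le> m \<Longrightarrow> D i 0 = 0"
proof -
  assume a: "delta_field m D L" "i \<le> m"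
  have z: "0 \<in> L" using a by (simp add: sf_0 df_sf)
  have "D i (0 + 0) = D i 0 + D i 0" by (rule df_add[OF a z z])
  thus ?thesis by (metis add_cancel_right_right add_0)
qed
lemma df_one: "delta_field m D L \<Longrightarrow> i \<le> m \<Longrightarrow> D i 1 = 0"
proof -
  assume a: "delta_field m D L" "i \<le> m"
  have z: "1 \<in> L" using a by (simp add: sf_1 df_sf)
  have "D i (1 * 1) = 1 * D i 1 + D i 1 * 1" by (rule df_mult[OF a z z])
  thus ?thesis by (metis add_cancel_right_right mult_1 mult_1_right)
qed
lemma df_uminus: "delta_field m D L \<Longrightarrow> i \<le> m \<Longrightarrow> x \<in> L \<Longrightarrow> D i (- x) = - D i x"
  using df_add[of m D L i x "-x"] df_zero[of m D L i]
  by (simp add: sf_uminus df_sf) (metis add.commute neg_eq_iff_add_eq_0)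
lemma df_inverse:
  assumes "delta_field m D L" "i \<le> m" "x \<in> L"
  shows "D i (inverse x) = - D i x * inverse x * inverse x"
proof (cases "x = 0")
  case True thus ?thesis using df_zero[OF assms(1,2)] by simp
next
  case False
  have "0 = D i (x * inverse x)" using False df_one[OF assms(1,2)] by simp
  also have "\<dots> = x * D i (inverse x) + D i x * inverse x"
    using df_mult[OF assms(1,2) assms(3)] assms by (simp add: sf_inverse df_sf)
  finally have "x * D i (inverse x) = - D i x * inverse x" by (simp add: eq_neg_iff_add_eq_0)
  hence "inverse x * (x * D i (inverse x)) = inverse x * (- D i x * inverse x)" by simp
  thus ?thesis using False by (simp add: field_simps)
qed

lemma closure_fg:
  assumes L: "delta_field m D L" and i: "i \<le> m" and AL: "A \<subseteq> L" and TL: "T \<subseteq> L"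
    and cl: "\<forall>x\<in>A \<union> T. D i x \<in> field_gen A T"
  shows "\<forall>x\<in>field_gen A T. D i x \<in> field_gen A T"
proof -
  let ?F = "field_gen A T"
  have sL: "subfield L" using L by (rule df_sf)
  have FL: "?F \<subseteq> L" using fg_least[OF sL AL TL] .
  have sF: "subfield ?F" by (rule fg_subfield)
  let ?S = "{x \<in> ?F. D i x \<in> ?F}"
  have "subfield ?S"
    unfolding subfield_def
  proof (intro conjI ballI)
    show "0 \<in> ?S" using df_zero[OF L i] sF by (simp add: sf_0)
    show "1 \<in> ?S" using df_one[OF L i] sF by (simp add: sf_0 sf_1)
  next
    fix x y assume x: "x \<in> ?S" and y: "y \<in> ?S"
    hence xL: "x \<in> L" and yL: "y \<in> L" using FL by auto
    show "x + y \<in> ?S" using x y df_add[OF L i xL yL] sF by (simp add: sf_add)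
    show "x * y \<in> ?S" using x y df_mult[OF L i xL yL] sF by (simp add: sf_add sf_mult)
  next
    fix x assume x: "x \<in> ?S"
    hence xL: "x \<in> L" using FL by auto
    show "- x \<in> ?S" using x df_uminus[OF L i xL] sF by (simp add: sf_uminus)
    show "inverse x \<in> ?S" using x df_inverse[OF L i xL] sF
      by (simp add: sf_uminus sf_mult sf_inverse)
  qed
  moreover have "A \<subseteq> ?S" using cl fg_A[of A T] by auto
  moreover have "T \<subseteq> ?S" using cl fg_T[of T A] by auto
  ultimately have "?F \<subseteq> ?S" by (rule fg_least)
  thus ?thesis by auto
qed

lemma derivs_sub:
  assumes "delta_field m D F" "t \<in> F"
  shows "derivs m D t \<subseteq> F"
proof
  fix x assume "x \<in> derivs m D t"
  thus "x \<in> F" by induction (use assms df_cl in auto)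
qed

lemma derivs_fold: "x \<in> derivs m D t \<Longrightarrow> x \<in> range (\<lambda>l. fold D l t)"
proof (induction rule: derivs.induct)
  case self
  then show ?case by (metis fold_Nil id_apply rangeI)
next
  case (step x i)
  then obtain l where "x = fold D l t" by auto
  hence "D i x = fold D (l @ [i]) t" by simp
  thus ?case by blast
qed

lemma derivs_countable: "countable (derivs m D t)"
proof -
  have "countable (range (\<lambda>l. fold D l t))" by (rule countable_image) (rule countableI_type)
  moreover have "derivs m D t \<subseteq> range (\<lambda>l. fold D l t)" using derivs_fold[of _ m D t] by blast
  ultimately show ?thesis by (rule countable_subset[rotated])
qed


section \<open>Algebraic elements\<close>

lemma df_poly:
  assumes L: "delta_field m D L" and M: "delta_field m D M" and MsubL: "M \<subseteq> L" and i: "i \<le> m"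
    and x: "x \<in> L"
  shows "(\<forall>j. coeff p j \<in> M) \<Longrightarrow> \<exists>q. (\<forall>j. coeff q j \<in> M) \<and>
           D i (poly p x) = poly q x + poly (pderiv p) x * D i x"
proof (induction p)
  case 0
  show ?case by (rule exI[of _ 0]) (simp add: df_zero[OF L i] sf_0[OF df_sf[OF M]])
next
  case (pCons a p)
  have aM: "a \<in> M" using pCons.prems by (metis coeff_pCons_0)
  have pM: "\<forall>j. coeff p j \<in> M" using pCons.prems by (metis coeff_pCons_Suc)
  then obtain q where qM: "\<forall>j. coeff q j \<in> M"
    and q: "D i (poly p x) = poly q x + poly (pderiv p) x * D i x" using pCons.IH by blast
  have pL: "poly p x \<in> L" using sf_poly[OF df_sf[OF L]] pM MsubL x by blast
  have aL: "a \<in> L" using aM MsubL by blast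
  have xpL: "x * poly p x \<in> L" using pL x df_sf[OF L] by (simp add: sf_mult)
  have "D i (poly (pCons a p) x) = D i a + (x * D i (poly p x) + D i x * poly p x)"
    by (simp add: df_add[OF L i aL xpL] df_mult[OF L i x pL])
  also have "\<dots> = poly (pCons (D i a) q) x + poly (pderiv (pCons a p)) x * D i x"
    by (simp add: q pderiv_pCons algebra_simps)
  finally have e: "D i (poly (pCons a p) x) = poly (pCons (D i a) q) x + poly (pderiv (pCons a p)) x * D i x" .
  have "\<forall>j. coeff (pCons (D i a) q) j \<in> M"
  proof
    fix j show "coeff (pCons (D i a) q) j \<in> M"
      using qM df_cl[OF M i aM] by (cases j) auto
  qed
  with e show ?case by blast
qed

lemma alg_deriv:
  fixes D :: "nat \<Rightarrow> 'a::field_char_0 \<Rightarrow> 'a"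
  assumes L: "delta_field m D L" and M: "delta_field m D M" and MsubL: "M \<subseteq> L" and i: "i \<le> m"
    and s: "s \<in> L" and alg: "algebraic_over M s"
  shows "D i s \<in> field_gen M {s}"
proof -
  have sM: "subfield M" using M by (rule df_sf)
  let ?P = "\<lambda>n. \<exists>p. degree p = n \<and> p \<noteq> 0 \<and> (\<forall>j. coeff p j \<in> M) \<and> poly p s = 0"
  have "\<exists>n. ?P n" using alg unfolding algebraic_over_def by blast
  then obtain n where Pn: "?P n" and minn: "\<forall>k<n. \<not> ?P k" using exists_least_iff[of ?P] by blast
  then obtain p where dp: "degree p = n" and p0: "p \<noteq> 0" and pM: "\<forall>j. coeff p j \<in> M"
    and ps: "poly p s = 0" by blast
  have "n \<noteq> 0"
  proof
    assume "n = 0"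
    then have pc: "p = [:coeff p 0:]" using dp by (metis degree_0_id)
    then have "poly [:coeff p 0:] s = 0" using ps by simp
    then have "coeff p 0 = 0" by simp
    then show False using p0 pc by simp
  qed
  hence pd0: "pderiv p \<noteq> 0" using dp by (simp add: pderiv_eq_0_iff)
  have pdM: "\<forall>j. coeff (pderiv p) j \<in> M"
    unfolding coeff_pderiv using pM sf_mult[OF sM] sf_of_nat[OF sM] by blast
  have "degree (pderiv p) < n" using dp \<open>n \<noteq> 0\<close> by (simp add: degree_pderiv)
  hence nz: "poly (pderiv p) s \<noteq> 0" using minn pd0 pdM by blast
  obtain q where qM: "\<forall>j. coeff q j \<in> M"
    and q: "D i (poly p s) = poly q s + poly (pderiv p) s * D i s"
    using df_poly[OF L M MsubL i s pM] by blast
  have "0 = poly q s + poly (pderiv p) s * D i s" using q ps df_zero[OF L i] by simp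
  hence eq: "D i s = - poly q s / poly (pderiv p) s" using nz by (simp add: field_simps eq_neg_iff_add_eq_0)
  let ?F = "field_gen M {s}"
  have sF: "subfield ?F" by (rule fg_subfield)
  have sinF: "s \<in> ?F" using fg_T by blast
  have MF: "M \<subseteq> ?F" by (rule fg_A)
  have "poly q s \<in> ?F" using sf_poly[OF sF] qM MF sinF by blast
  moreover have "poly (pderiv p) s \<in> ?F" using sf_poly[OF sF] pdM MF sinF by blast
  ultimately show ?thesis unfolding eq using sF by (simp add: sf_divide sf_uminus)
qed


section \<open>One step of the tower\<close>

lemma derivs_sub':
  assumes "t \<in> F" "\<forall>i\<le>m. \<forall>x\<in>F. D i x \<in> F"
  shows "derivs m D t \<subseteq> F"
proof
  fix x assume "x \<in> derivs m D t"
  thus "x \<in> F" by induction (use assms in auto)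
qed

lemma zero_liouv: "delta_field m D L \<Longrightarrow> subfield F \<Longrightarrow> liouv_elem D F 0"
  unfolding liouv_elem_def using df_zero[of m D L 0] sf_0[of F] by simp

lemma step_lemma:
  fixes D :: "nat \<Rightarrow> 'a::field_char_0 \<Rightarrow> 'a"
  assumes L: "delta_field m D L" and M: "delta_field m D M" and N: "delta_field m D N"
    and MN: "M \<subseteq> N" and NL: "N \<subseteq> L" and Ndef: "N = delta_gen m D M s"
    and lv: "liouv_elem D M s"
  shows "\<exists>P (t1::nat \<Rightarrow> 'a) (t2::nat \<Rightarrow> 'a). P = field_gen M (range t1) \<and> N = field_gen P (range t2) \<and> M \<subseteq> P \<and> P \<subseteq> N \<and>
           (\<forall>j. liouv_elem D M (t1 j)) \<and> (\<forall>j. liouv_elem D P (t2 j))"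
proof -
  have sN: "subfield N" using N by (rule df_sf)
  have sM: "subfield M" using M by (rule df_sf)
  have sL: "subfield L" using L by (rule df_sf)
  have Ngen: "N = field_gen M (derivs m D s)" using Ndef by (simp add: delta_gen_def)
  have sder: "s \<in> derivs m D s" by (rule derivs.self)
  have sN': "s \<in> N" using Ngen fg_T sder by blast
  have dN: "derivs m D s \<subseteq> N" by (rule derivs_sub[OF N sN'])
  have MsubL': "M \<subseteq> L" using MN NL by blast
  have sL': "s \<in> L" using sN' NL by blast
  have z2: "\<forall>j. liouv_elem D N ((\<lambda>_. 0) j)" using zero_liouv[OF L sN] by simp
  have fN: "N = field_gen N (range (\<lambda>_::nat. 0::'a))" using fg_id[OF sN] sf_0[OF sN] by auto
  consider (int) "D 0 s \<in> M" | (exp) "s \<noteq> 0" "D 0 s / s \<in> M" | (alg) "algebraic_over M s"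
    using lv unfolding liouv_elem_def by blast
  then show ?thesis
  proof cases
    case int
    define t1 where "t1 = from_nat_into (derivs m D s)"
    have r: "range t1 = derivs m D s" unfolding t1_def
    proof (rule range_from_nat_into)
      show "derivs m D s \<noteq> {}" using sder by blast
    qed (rule derivs_countable)
    have "\<forall>x\<in>derivs m D s. D 0 x \<in> M"
    proof
      fix x assume "x \<in> derivs m D s"
      thus "D 0 x \<in> M"
      proof induction
        case self thus ?case using int .
      next
        case (step x i)
        have "x \<in> L" using step.hyps dN NL by blast
        hence "D 0 (D i x) = D i (D 0 x)" using df_comm[OF L _ step.hyps(2)] by simp
        thus ?case using df_cl[OF M step.hyps(2) step.IH] by simp
      qed
    qed
    hence "\<forall>j. liouv_elem D M (t1 j)" using r unfolding liouv_elem_def by (metis rangeI)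
    hence "N = field_gen M (range t1) \<and> N = field_gen N (range (\<lambda>_::nat. 0::'a)) \<and> M \<subseteq> N \<and> N \<subseteq> N \<and>
           (\<forall>j. liouv_elem D M (t1 j)) \<and> (\<forall>j. liouv_elem D N ((\<lambda>_. 0) j))"
      using r Ngen fN z2 MN by simp
    note H = this
    show ?thesis
      apply (rule exI[where x="N"])
      apply (rule exI[where x="t1"])
      apply (rule exI[where x="\<lambda>_::nat. 0::'a"])
      by (rule H)
  next
    case alg
    let ?P = "field_gen M {s}"
    have PN: "?P \<subseteq> N" using fg_least[OF sN MN] sN' by blast
    have cl: "\<forall>i\<le>m. \<forall>x\<in>?P. D i x \<in> ?P"
    proof (intro allI impI)
      fix i assume i: "i \<le> m"
      show "\<forall>x\<in>?P. D i x \<in> ?P"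
      proof (rule closure_fg[OF L i MsubL'])
        show "{s} \<subseteq> L" using sL' by blast
        show "\<forall>x\<in>M \<union> {s}. D i x \<in> ?P"
          using alg_deriv[OF L M MsubL' i sL' alg] df_cl[OF M i] fg_A[of M "{s}"] by blast
      qed
    qed
    have "derivs m D s \<subseteq> ?P" by (rule derivs_sub'[OF _ cl]) (use fg_T in blast)
    hence "N \<subseteq> ?P" unfolding Ngen by (rule fg_least[OF fg_subfield fg_A])
    hence NP: "N = ?P" using PN by blast
    have "\<forall>j. liouv_elem D M ((\<lambda>_. s) j)" using alg unfolding liouv_elem_def by simp
    moreover have "range (\<lambda>_::nat. s) = {s}" by auto
    ultimately have "N = field_gen M (range (\<lambda>_::nat. s)) \<and> N = field_gen N (range (\<lambda>_::nat. 0::'a)) \<and> M \<subseteq> N \<and> N \<subseteq> N \<and>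
           (\<forall>j. liouv_elem D M ((\<lambda>_. s) j)) \<and> (\<forall>j. liouv_elem D N ((\<lambda>_. 0) j))"
      using NP fN z2 MN by simp
    note H = this
    show ?thesis
      apply (rule exI[where x="N"])
      apply (rule exI[where x="\<lambda>_::nat. s"])
      apply (rule exI[where x="\<lambda>_::nat. 0::'a"])
      by (rule H)
  next
    case exp
    define a where "a = D 0 s / s"
    have aM: "a \<in> M" using exp a_def by simp
    have aL: "a \<in> L" using aM MsubL' by blast
    have D0s: "D 0 s = a * s" using exp a_def by simp
    define T where "T = (\<Union>j\<in>{..m}. derivs m D (D j s / s))"
    have DjsN: "D j s / s \<in> N" if "j \<le> m" for j
      using sf_divide[OF sN df_cl[OF N that sN'] sN'] .
    have TN: "T \<subseteq> N" unfolding T_def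
    proof (rule UN_least)
      fix j assume "j \<in> {..m}"
      hence "j \<le> m" by simp
      thus "derivs m D (D j s / s) \<subseteq> N" by (rule derivs_sub[OF N DjsN])
    qed
    have TL: "T \<subseteq> L" using TN NL by blast
    have "D 0 s / s \<in> T" unfolding T_def by (rule UN_I[of 0]) (auto intro: derivs.self)
    hence Tne: "T \<noteq> {}" by blast
    have Tc: "countable T" unfolding T_def by (rule countable_UN) (auto simp: derivs_countable)
    define t1 where "t1 = from_nat_into T"
    have r: "range t1 = T" unfolding t1_def using range_from_nat_into[OF Tne Tc] .
    define P where "P = field_gen M T"
    have MP: "M \<subseteq> P" unfolding P_def by (rule fg_A)
    have TP: "T \<subseteq> P" unfolding P_def by (rule fg_T)
    have PN: "P \<subseteq> N" unfolding P_def by (rule fg_least[OF sN MN TN])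
    have PL: "P \<subseteq> L" using PN NL by blast
    have sP: "subfield P" unfolding P_def by (rule fg_subfield)
    have base: "D 0 (D j s / s) \<in> M" if j: "j \<le> m" for j
    proof -
      have DjsL: "D j s \<in> L" using df_cl[OF L j sL'] .
      have isL: "inverse s \<in> L" using sf_inverse[OF sL sL'] .
      have e1: "D 0 (D j s) = a * D j s + D j a * s"
        using df_comm[OF L _ j sL'] D0s df_mult[OF L j aL sL'] by simp
      have e2: "D 0 (inverse s) = - (a * s) * inverse s * inverse s"
        using df_inverse[OF L _ sL'] D0s by simp
      have "D 0 (D j s / s) = D j s * D 0 (inverse s) + D 0 (D j s) * inverse s"
        unfolding divide_inverse using df_mult[OF L _ DjsL isL] by simp
      also have "\<dots> = D j a" unfolding e1 e2 using exp(1) by (simp add: field_simps)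
      finally show ?thesis using df_cl[OF M j aM] by simp
    qed
    have TD0: "\<forall>x\<in>T. D 0 x \<in> M"
    proof
      fix x assume "x \<in> T"
      then obtain j where j: "j \<le> m" and x: "x \<in> derivs m D (D j s / s)" unfolding T_def by blast
      from x show "D 0 x \<in> M"
      proof induction
        case self thus ?case using base[OF j] .
      next
        case (step x i)
        have "x \<in> T" using step.hyps j unfolding T_def by blast
        hence "x \<in> L" using TL by blast
        hence "D 0 (D i x) = D i (D 0 x)" using df_comm[OF L _ step.hyps(2)] by simp
        thus ?case using df_cl[OF M step.hyps(2) step.IH] by simp
      qed
    qed
    hence l1: "\<forall>j. liouv_elem D M (t1 j)" using r unfolding liouv_elem_def by (metis rangeI)
    have l2: "\<forall>j. liouv_elem D P ((\<lambda>_. s) j)" using exp MP unfolding liouv_elem_def by auto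
    have Tcl: "D i x \<in> T" if "i \<le> m" "x \<in> T" for i x
    proof -
      from that obtain j where j: "j \<le> m" and x: "x \<in> derivs m D (D j s / s)" unfolding T_def by blast
      have "D i x \<in> derivs m D (D j s / s)" using derivs.step[OF x that(1)] .
      thus ?thesis using j unfolding T_def by blast
    qed
    have Pcl: "D i x \<in> P" if i: "i \<le> m" and x: "x \<in> P" for i x
    proof -
      have "\<forall>x\<in>field_gen M T. D i x \<in> field_gen M T"
      proof (rule closure_fg[OF L i MsubL' TL])
        show "\<forall>x\<in>M \<union> T. D i x \<in> field_gen M T"
          using df_cl[OF M i] Tcl[OF i] MP TP unfolding P_def by blast
      qed
      thus ?thesis using x unfolding P_def by blast
    qed
    let ?G = "field_gen P {s}"
    have sG: "subfield ?G" by (rule fg_subfield)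
    have PG: "P \<subseteq> ?G" by (rule fg_A)
    have sG': "s \<in> ?G" using fg_T by blast
    have inv: "x * inverse s \<in> P" if "x \<in> derivs m D s" for x
      using that
    proof induction
      case self thus ?case using exp(1) sf_1[OF sP] by simp
    next
      case (step x i)
      define c where "c = x * inverse s"
      have cP: "c \<in> P" using step.IH c_def by simp
      have cL: "c \<in> L" using cP PL by blast
      have xc: "x = c * s" using c_def exp(1) by simp
      have "D i x = c * D i s + D i c * s" unfolding xc by (rule df_mult[OF L step.hyps(2) cL sL'])
      hence "D i x * inverse s = c * (D i s / s) + D i c" using exp(1) by (simp add: field_simps)
      moreover have "D i s / s \<in> T" unfolding T_def
        by (rule UN_I[of i]) (use step.hyps(2) in \<open>auto intro: derivs.self\<close>)
      hence "D i s / s \<in> P" using TP by blast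
      moreover have "D i c \<in> P" using Pcl[OF step.hyps(2) cP] .
      ultimately show ?case using cP sP by (metis sf_add sf_mult)
    qed
    have "derivs m D s \<subseteq> ?G"
    proof
      fix x assume x: "x \<in> derivs m D s"
      have xe: "x = (x * inverse s) * s" using exp(1) by simp
      have "x * inverse s \<in> ?G" using inv[OF x] PG by blast
      hence "(x * inverse s) * s \<in> ?G" using sf_mult[OF sG _ sG'] by blast
      thus "x \<in> ?G" by (simp only: xe[symmetric])
    qed
    hence "N \<subseteq> ?G" unfolding Ngen using fg_least[OF sG] MP PG by blast
    moreover have "?G \<subseteq> N" using fg_least[OF sN PN] sN' by blast
    ultimately have NG: "N = field_gen P (range (\<lambda>_::nat. s))" by (simp add: image_constant_conv)
    have "P = field_gen M (range t1) \<and> N = field_gen P (range (\<lambda>_::nat. s)) \<and> M \<subseteq> P \<and> P \<subseteq> N \<and>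
           (\<forall>j. liouv_elem D M (t1 j)) \<and> (\<forall>j. liouv_elem D P ((\<lambda>_. s) j))"
      using NG l1 l2 MP PN r unfolding P_def by simp
    note H = this
    show ?thesis
      apply (rule exI[where x="P"])
      apply (rule exI[where x="t1"])
      apply (rule exI[where x="\<lambda>_::nat. s"])
      by (rule H)
  qed
qed


theorem lemma9p14:
  fixes m :: nat and D :: "nat \<Rightarrow> 'a::field_char_0 \<Rightarrow> 'a" and k L :: "'a set"
  assumes "delta_field m D k"
    and "param_liouvillian m D k L"
  shows "\<exists>(Ls :: nat \<Rightarrow> 'a set) (t :: nat \<Rightarrow> nat \<Rightarrow> 'a).
           Ls 0 = k \<and> (\<forall>i. Ls i \<subseteq> Ls (Suc i)) \<and> L = (\<Union>i. Ls i) \<and>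
           (\<forall>i. Ls (Suc i) = field_gen (Ls i) (range (t i))) \<and>
           (\<forall>i j. liouv_elem D (Ls i) (t i j))"
proof -
  have L: "delta_field m D L" using assms(2) unfolding param_liouvillian_def by blast
  obtain r Ms s where Ms0: "Ms 0 = k" and Msr: "Ms r = L"
    and dfM: "\<forall>i\<le>r. delta_field m D (Ms i)"
    and ch: "\<forall>i<r. Ms i \<subseteq> Ms (Suc i) \<and> Ms (Suc i) = delta_gen m D (Ms i) (s (Suc i)) \<and>
               liouv_elem D (Ms i) (s (Suc i))"
    using assms(2) unfolding param_liouvillian_def by blast
  have sL: "subfield L" using L by (rule df_sf)
  have mono: "Ms i \<subseteq> Ms r" if "i \<le> r" for i
    using that
  proof (induction rule: inc_induct)
    case base thus ?case by simp
  next
    case (step n) thus ?case using ch by blast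
  qed
  have MsL: "Ms i \<subseteq> L" if "i \<le> r" for i using mono[OF that] Msr by simp
  have "\<forall>i. \<exists>P (t1::nat \<Rightarrow> 'a) (t2::nat \<Rightarrow> 'a). i < r \<longrightarrow>
          (P = field_gen (Ms i) (range t1) \<and> Ms (Suc i) = field_gen P (range t2) \<and>
           Ms i \<subseteq> P \<and> P \<subseteq> Ms (Suc i) \<and>
           (\<forall>j. liouv_elem D (Ms i) (t1 j)) \<and> (\<forall>j. liouv_elem D P (t2 j)))"
  proof
    fix i
    show "\<exists>P (t1::nat \<Rightarrow> 'a) (t2::nat \<Rightarrow> 'a). i < r \<longrightarrow>
          (P = field_gen (Ms i) (range t1) \<and> Ms (Suc i) = field_gen P (range t2) \<and>
           Ms i \<subseteq> P \<and> P \<subseteq> Ms (Suc i) \<and>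
           (\<forall>j. liouv_elem D (Ms i) (t1 j)) \<and> (\<forall>j. liouv_elem D P (t2 j)))"
    proof (cases "i < r")
      case True
      have "\<exists>P (t1::nat \<Rightarrow> 'a) (t2::nat \<Rightarrow> 'a).
          (P = field_gen (Ms i) (range t1) \<and> Ms (Suc i) = field_gen P (range t2) \<and>
           Ms i \<subseteq> P \<and> P \<subseteq> Ms (Suc i) \<and>
           (\<forall>j. liouv_elem D (Ms i) (t1 j)) \<and> (\<forall>j. liouv_elem D P (t2 j)))"
      proof (rule step_lemma[OF L])
        show "delta_field m D (Ms i)" using dfM True by simp
        show "delta_field m D (Ms (Suc i))" using dfM True by simp
        show "Ms i \<subseteq> Ms (Suc i)" using ch True by blast
        show "Ms (Suc i) \<subseteq> L" using MsL True by simp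
        show "Ms (Suc i) = delta_gen m D (Ms i) (s (Suc i))" using ch True by blast
        show "liouv_elem D (Ms i) (s (Suc i))" using ch True by blast
      qed
      thus ?thesis by blast
    qed simp
  qed
  note ex = this
  obtain Pf and T1 T2 :: "nat \<Rightarrow> nat \<Rightarrow> 'a" where H: "\<And>i. i < r \<Longrightarrow>
          (Pf i = field_gen (Ms i) (range (T1 i)) \<and> Ms (Suc i) = field_gen (Pf i) (range (T2 i)) \<and>
           Ms i \<subseteq> Pf i \<and> Pf i \<subseteq> Ms (Suc i) \<and>
           (\<forall>j. liouv_elem D (Ms i) (T1 i j)) \<and> (\<forall>j. liouv_elem D (Pf i) (T2 i j)))"
  proof -
    define Q where "Q i P (t1::nat \<Rightarrow> 'a) (t2::nat \<Rightarrow> 'a) \<longleftrightarrow> (i < r \<longrightarrow>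
          (P = field_gen (Ms i) (range t1) \<and> Ms (Suc i) = field_gen P (range t2) \<and>
           Ms i \<subseteq> P \<and> P \<subseteq> Ms (Suc i) \<and>
           (\<forall>j. liouv_elem D (Ms i) (t1 j)) \<and> (\<forall>j. liouv_elem D P (t2 j))))" for i P t1 t2
    have "\<forall>i. \<exists>P t1 t2. Q i P t1 t2" using ex unfolding Q_def .
    then obtain Pf where h1: "\<forall>i. \<exists>t1 t2. Q i (Pf i) t1 t2" using choice by metis
    then obtain T1 where h2: "\<forall>i. \<exists>t2. Q i (Pf i) (T1 i) t2" using choice by metis
    then obtain T2 where h3: "\<forall>i. Q i (Pf i) (T1 i) (T2 i)" using choice by metis
    show ?thesis
    proof (rule that)
      fix i assume "i < r"
      thus "Pf i = field_gen (Ms i) (range (T1 i)) \<and> Ms (Suc i) = field_gen (Pf i) (range (T2 i)) \<and>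
           Ms i \<subseteq> Pf i \<and> Pf i \<subseteq> Ms (Suc i) \<and>
           (\<forall>j. liouv_elem D (Ms i) (T1 i j)) \<and> (\<forall>j. liouv_elem D (Pf i) (T2 i j))"
        using h3 unfolding Q_def by blast
    qed
  qed
  define Ls where "Ls n = (if 2 * r \<le> n then L else if even n then Ms (n div 2) else Pf (n div 2))" for n
  define t where "t n = (if 2 * r \<le> n then (\<lambda>_::nat. 0::'a) else if even n then T1 (n div 2) else T2 (n div 2))" for n
  have LsS: "Ls (Suc n) = field_gen (Ls n) (range (t n))" for n
  proof (cases "2 * r \<le> n")
    case True
    have "range (t n) = {0}" using True unfolding t_def by auto
    moreover have "Ls n = L" "Ls (Suc n) = L" using True unfolding Ls_def by auto
    ultimately show ?thesis using fg_id[OF sL] sf_0[OF sL] by simp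
  next
    case False
    show ?thesis
    proof (cases "even n")
      case True
      then obtain i where n: "n = 2 * i" by (rule evenE)
      have i: "i < r" using False n by simp
      have "Ls n = Ms i" "t n = T1 i" using False True n unfolding Ls_def t_def by auto
      moreover have "Ls (Suc n) = Pf i" using False n i unfolding Ls_def by auto
      ultimately show ?thesis using H[OF i] by simp
    next
      case odd: False
      then obtain i where n: "n = 2 * i + 1" by (rule oddE)
      have i: "i < r" using False n by simp
      have "Ls n = Pf i" "t n = T2 i" using False odd n unfolding Ls_def t_def by auto
      moreover have "Ls (Suc n) = Ms (Suc i)"
      proof (cases "Suc i = r")
        case True thus ?thesis using n Msr unfolding Ls_def by auto
      next
        case False thus ?thesis using n i unfolding Ls_def by auto
      qed
      ultimately show ?thesis using H[OF i] by simp
    qed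
  qed
  have liou: "liouv_elem D (Ls n) (t n j)" for n j
  proof (cases "2 * r \<le> n")
    case True
    have "Ls n = L" "t n j = 0" using True unfolding Ls_def t_def by auto
    thus ?thesis using zero_liouv[OF L sL] by simp
  next
    case False
    show ?thesis
    proof (cases "even n")
      case True
      then obtain i where n: "n = 2 * i" by (rule evenE)
      have i: "i < r" using False n by simp
      have "Ls n = Ms i" "t n = T1 i" using False True n unfolding Ls_def t_def by auto
      thus ?thesis using H[OF i] by simp
    next
      case odd: False
      then obtain i where n: "n = 2 * i + 1" by (rule oddE)
      have i: "i < r" using False n by simp
      have "Ls n = Pf i" "t n = T2 i" using False odd n unfolding Ls_def t_def by auto
      thus ?thesis using H[OF i] by metis
    qed
  qed
  have LsL: "Ls n \<subseteq> L" for n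
  proof (cases "2 * r \<le> n")
    case True thus ?thesis unfolding Ls_def by simp
  next
    case False
    show ?thesis
    proof (cases "even n")
      case True
      then obtain i where n: "n = 2 * i" by (rule evenE)
      have i: "i < r" using False n by simp
      have "Ls n = Ms i" using False True n unfolding Ls_def by auto
      thus ?thesis using MsL i by simp
    next
      case odd: False
      then obtain i where n: "n = 2 * i + 1" by (rule oddE)
      have i: "i < r" using False n by simp
      have "Ls n = Pf i" using False odd n unfolding Ls_def by auto
      moreover have "Pf i \<subseteq> Ms (Suc i)" using H[OF i] by blast
      moreover have "Ms (Suc i) \<subseteq> L" using MsL[of "Suc i"] i by simp
      ultimately show ?thesis by blast
    qed
  qed
  have Ls0: "Ls 0 = k"
    by (cases "r = 0") (use Ms0 Msr in \<open>auto simp: Ls_def\<close>)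
  have mono': "\<forall>i. Ls i \<subseteq> Ls (Suc i)" using LsS fg_A by metis
  have un: "L = (\<Union>i. Ls i)"
  proof
    show "L \<subseteq> (\<Union>i. Ls i)" using Ls_def[of "2 * r"] by auto
    show "(\<Union>i. Ls i) \<subseteq> L" using LsL by blast
  qed
  have "Ls 0 = k \<and> (\<forall>i. Ls i \<subseteq> Ls (Suc i)) \<and> L = (\<Union>i. Ls i) \<and>
           (\<forall>i. Ls (Suc i) = field_gen (Ls i) (range (t i))) \<and>
           (\<forall>i j. liouv_elem D (Ls i) (t i j))"
    using Ls0 mono' un LsS liou by blast
  thus ?thesis by (intro exI) assumption
qed

end
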